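(* Let $n\ge1$ and $1\le k\le n$ be integers. Then $$|\mathrm{SVT}((1^k),n)|=\binom{n}{k}\,{}_2F_1\!\left(\begin{matrix}k,\;k-n\\ k+1\end{matrix};-1\right).$$
   Context: Let $[n]=\{1,\dots,n\}$. For a partition $\lambda$ with at most $n$ nonzero parts, identified with its Young diagram $\{(i,j): 1\le j\le\lambda_i\}$ (row index $i$ increasing downward, column index $j$ to the right), a set-valued tableau of shape $\lambda$ with entries in $[n]$ assigns to every box $(i,j)$ a nonempty subset $T_{i,j}\subseteq[n]$ such that $\max T_{i,j}\le\min T_{i,j+1}$ and $\max T_{i,j}<\min T_{i+1,j}$ whenever these boxes exist; $\mathrm{SVT}(\lambda,n)$ is the set of these tableaux, and $(1^k)$ is the one-column partition with $k$ boxes. $(a)_0=1$, $(a)_m=a(a+1)\cdots(a+m-1)$, and ${}_2F_1\!\left(\begin{smallmatrix}a,\,b\\ c\end{smallmatrix};z\right)=\sum_{m\ge0}\frac{(a)_m(b)_m}{(c)_m}\frac{z^m}{m!}$, a finite sum when $b$ is a nonpositive integer. *)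

theory Defs
  imports Complex_Main
begin

text \<open>A partition is given as the list of its nonzero parts (weakly decreasing).
  Its Young diagram uses 1-based row index i and column index j.\<close>

definition young_diagram :: "nat list \<Rightarrow> (nat \<times> nat) set" where
  "young_diagram lam = {(i, j). 1 \<le> i \<and> i \<le> length lam \<and> 1 \<le> j \<and> j \<le> lam ! (i - 1)}"

text \<open>Set-valued tableaux of shape lam with entries in [n]. Outside the diagram
  the filling is fixed to the empty set, so tableaux are determined by their
  values on the boxes.\<close>

definition SVT :: "nat list \<Rightarrow> nat \<Rightarrow> (nat \<times> nat \<Rightarrow> nat set) set" where
  "SVT lam n = {T.
     (\<forall>b \<in> young_diagram lam. T b \<noteq> {} \<and> T b \<subseteq> {1..n}) \<and>
     (\<forall>b. b \<notin> young_diagram lam \<longrightarrow> T b = {}) \<and>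
     (\<forall>i j. (i, j) \<in> young_diagram lam \<and> (i, j + 1) \<in> young_diagram lam
            \<longrightarrow> Max (T (i, j)) \<le> Min (T (i, j + 1))) \<and>
     (\<forall>i j. (i, j) \<in> young_diagram lam \<and> (i + 1, j) \<in> young_diagram lam
            \<longrightarrow> Max (T (i, j)) < Min (T (i + 1, j)))}"

text \<open>Gauss hypergeometric series 2F1(a,b;c;z) (a finite sum when b is a
  nonpositive integer, since then all terms with m > -b vanish).\<close>

definition hyp2f1 :: "real \<Rightarrow> real \<Rightarrow> real \<Rightarrow> real \<Rightarrow> real" where
  "hyp2f1 a b c z = (\<Sum>m. pochhammer a m * pochhammer b m / pochhammer c m * z ^ m / fact m)"

end

theory Submission
  imports Defs "HOL-Library.FuncSet"
begin


definition CH :: "nat \<Rightarrow> nat \<Rightarrow> (nat \<Rightarrow> nat set) set" where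
"CH k n = {T. (\<forall>i\<in>{1..k}. T i \<noteq> {} \<and> T i \<subseteq> {1..n}) \<and> (\<forall>i. i \<notin> {1..k} \<longrightarrow> T i = {})
   \<and> (\<forall>i. 1 \<le> i \<and> i < k \<longrightarrow> Max (T i) < Min (T (Suc i)))}"

lemma CH_fin: "finite (CH k n)"
proof -
  have "CH k n \<subseteq> (\<lambda>f i. if i \<in> {1..k} then f i else {}) ` PiE {1..k} (\<lambda>_. Pow {1..n})"
  proof
    fix T assume T: "T \<in> CH k n"
    have "T = (\<lambda>i. if i \<in> {1..k} then restrict T {1..k} i else {})"
      using T unfolding CH_def by (auto simp: fun_eq_iff restrict_apply)
    moreover have "restrict T {1..k} \<in> PiE {1..k} (\<lambda>_. Pow {1..n})"
      using T unfolding CH_def by auto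
    ultimately show "T \<in> (\<lambda>f i. if i \<in> {1..k} then f i else {}) ` PiE {1..k} (\<lambda>_. Pow {1..n})"
      by blast
  qed
  moreover have "finite (PiE {1..k} (\<lambda>_. Pow {1..n::nat}))" by (simp add: finite_PiE)
  ultimately show ?thesis using finite_subset by blast
qed

lemma CH_0: "CH 0 n = {\<lambda>_. {}}"
  unfolding CH_def by auto

lemma CH_Suc0: "CH (Suc k) 0 = {}"
  unfolding CH_def by force

lemma lt_top:
  assumes T: "T \<in> CH K m" and x: "x \<in> T i" and i: "i < K"
  shows "x < m"
proof -
  have C1: "\<And>i. i \<in> {1..K} \<Longrightarrow> T i \<noteq> {} \<and> T i \<subseteq> {1..m}"
    and C2: "\<And>i. i \<notin> {1..K} \<Longrightarrow> T i = {}"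
    and C3: "\<And>i. 1 \<le> i \<and> i < K \<Longrightarrow> Max (T i) < Min (T (Suc i))"
    using T unfolding CH_def by auto
  have i1: "i \<in> {1..K}"
  proof (rule ccontr)
    assume "i \<notin> {1..K}" then have "T i = {}" by (rule C2)
    then show False using x by simp
  qed
  have fin: "finite (T i)" using C1[OF i1] finite_subset by blast
  have si: "Suc i \<in> {1..K}" using i by simp
  have ne: "T (Suc i) \<noteq> {}" "T (Suc i) \<subseteq> {1..m}" using C1[OF si] by auto
  have fin2: "finite (T (Suc i))" using ne(2) finite_subset by blast
  have "x \<le> Max (T i)" using fin x by simp
  also have "\<dots> < Min (T (Suc i))" using C3 i i1 by simp
  also have "\<dots> \<le> m" using ne Min_in[OF fin2 ne(1)] by auto
  finally show ?thesis .
qed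

lemma CH_D:
  assumes "T \<in> CH K m"
  shows "i \<in> {1..K} \<Longrightarrow> T i \<noteq> {}" "i \<in> {1..K} \<Longrightarrow> T i \<subseteq> {1..m}"
    "i \<notin> {1..K} \<Longrightarrow> T i = {}" "1 \<le> i \<Longrightarrow> i < K \<Longrightarrow> Max (T i) < Min (T (Suc i))"
  using assms unfolding CH_def by auto

lemma CH_mono: "T \<in> CH K n \<Longrightarrow> n \<le> m \<Longrightarrow> T \<in> CH K m"
  unfolding CH_def by fastforce

lemma CH_step:
  "card (CH (Suc k) (Suc n)) = 2 * card (CH (Suc k) n) + card (CH k n)"
proof -
  define K where "K = Suc k"
  define N where "N = Suc n"
  define P1 where "P1 = {T\<in>CH K N. N \<notin> T K}"
  define P2 where "P2 = {T\<in>CH K N. T K = {N}}"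
  define P3 where "P3 = {T\<in>CH K N. N \<in> T K \<and> T K \<noteq> {N}}"
  have U: "CH K N = P1 \<union> P2 \<union> P3" unfolding P1_def P2_def P3_def by auto
  have fin: "finite P1" "finite P2" "finite P3" unfolding P1_def P2_def P3_def
    using CH_fin by auto
  have notN: "N \<notin> T i" if "T \<in> CH K N" "i \<noteq> K" for T i
  proof
    assume a: "N \<in> T i"
    show False
    proof (cases "i < K")
      case True then show False using lt_top[OF that(1) a] by simp
    next
      case False then have "i \<notin> {1..K}" using that by auto
      then show False using that(1) a unfolding CH_def by auto
    qed
  qed
  have e1: "P1 = CH K n"
  proof
    show "P1 \<subseteq> CH K n"
    proof
      fix T assume T: "T \<in> P1"
      then have T1: "T \<in> CH K N" "N \<notin> T K" unfolding P1_def by auto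
      have nN: "N \<notin> T i" for i using notN[OF T1(1)] T1(2) by (cases "i = K") auto
      have C1: "\<And>i. i \<in> {1..K} \<Longrightarrow> T i \<noteq> {} \<and> T i \<subseteq> {1..N}"
        and C2: "\<And>i. i \<notin> {1..K} \<Longrightarrow> T i = {}"
        and C3: "\<And>i. 1 \<le> i \<and> i < K \<Longrightarrow> Max (T i) < Min (T (Suc i))"
        using T1(1) unfolding CH_def by auto
      have sub: "T i \<subseteq> {1..n}" if "i \<in> {1..K}" for i
      proof
        fix x assume x: "x \<in> T i"
        then have "x \<in> {1..N}" "x \<noteq> N" using C1[OF that] nN[of i] by auto
        then show "x \<in> {1..n}" unfolding N_def by auto
      qed
      show "T \<in> CH K n" unfolding CH_def using C1 C2 C3 sub by blast
    qed
  next
    show "CH K n \<subseteq> P1"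
    proof
      fix T assume T: "T \<in> CH K n"
      have "T \<in> CH K N" using CH_mono[OF T, of N] unfolding N_def by simp
      moreover have "T K \<subseteq> {1..n}" using T unfolding CH_def K_def by auto
      then have "N \<notin> T K" unfolding N_def by auto
      ultimately show "T \<in> P1" unfolding P1_def by simp
    qed
  qed
  have b2: "bij_betw (\<lambda>T. T(K:={})) P2 (CH k n)"
  proof (rule bij_betw_byWitness[where f'="\<lambda>S. S(K:={N})"])
    show "\<forall>a\<in>P2. (a(K := {}))(K := {N}) = a" unfolding P2_def by (auto simp: fun_eq_iff)
    show "\<forall>a\<in>CH k n. (a(K := {N}))(K := {}) = a"
    proof
      fix a assume a: "a \<in> CH k n"
      have "a K = {}" using CH_D(3)[OF a, of K] unfolding K_def by auto
      then show "(a(K := {N}))(K := {}) = a" by (auto simp: fun_eq_iff)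
    qed
    show "(\<lambda>T. T(K := {})) ` P2 \<subseteq> CH k n"
    proof
      fix S assume "S \<in> (\<lambda>T. T(K := {})) ` P2"
      then obtain T where T: "T \<in> CH K N" "T K = {N}" and S: "S = T(K := {})" unfolding P2_def by auto
      have sub: "T i \<subseteq> {1..n}" if "i \<in> {1..k}" for i
      proof
        fix x assume x: "x \<in> T i"
        have "x < N" using lt_top[OF T(1) x] that K_def by auto
        moreover have "x \<in> {1..N}" using CH_D(2)[OF T(1), of i] that x unfolding K_def by auto
        ultimately show "x \<in> {1..n}" unfolding N_def by auto
      qed
      show "S \<in> CH k n" unfolding CH_def
      proof (intro CollectI conjI allI impI ballI)
        fix i assume i: "i \<in> {1..k}"
        then have iK: "i \<in> {1..K}" "i \<noteq> K" unfolding K_def by auto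
        show "S i \<noteq> {}" using CH_D(1)[OF T(1) iK(1)] iK(2) unfolding S by simp
        show "S i \<subseteq> {1..n}" using sub[OF i] iK(2) unfolding S by simp
      next
        fix i assume i: "i \<notin> {1..k}"
        show "S i = {}"
        proof (cases "i = K")
          case True then show ?thesis unfolding S by simp
        next
          case False then have "i \<notin> {1..K}" using i unfolding K_def by auto
          then show ?thesis using CH_D(3)[OF T(1)] False unfolding S by simp
        qed
      next
        fix i assume i: "1 \<le> i \<and> i < k"
        then have "i \<noteq> K" "Suc i \<noteq> K" "i < K" unfolding K_def by auto
        then show "Max (S i) < Min (S (Suc i))" using CH_D(4)[OF T(1), of i] i unfolding S by simp
      qed
    qed
    show "(\<lambda>S. S(K := {N})) ` CH k n \<subseteq> P2"
    proof
      fix T assume "T \<in> (\<lambda>S. S(K := {N})) ` CH k n"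
      then obtain S where S: "S \<in> CH k n" and T: "T = S(K := {N})" by auto
      have mx: "Max (S k) < N" if "1 \<le> k"
      proof -
        have kk: "k \<in> {1..k}" using that by auto
        have "S k \<noteq> {}" "S k \<subseteq> {1..n}" using CH_D(1,2)[OF S kk] by auto
        then have "Max (S k) \<in> {1..n}" using Max_in[of "S k"] finite_subset by blast
        then show ?thesis unfolding N_def by auto
      qed
      have "T \<in> CH K N" unfolding CH_def
      proof (intro CollectI conjI allI impI ballI)
        fix i assume i: "i \<in> {1..K}"
        show "T i \<noteq> {}"
        proof (cases "i = K")
          case True then show ?thesis unfolding T by simp
        next
          case False then have "i \<in> {1..k}" using i K_def by auto
          then show ?thesis using CH_D(1)[OF S, of i] False unfolding T by auto
        qed
        show "T i \<subseteq> {1..N}"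
        proof (cases "i = K")
          case True then show ?thesis unfolding T N_def by simp
        next
          case False then have "i \<in> {1..k}" using i K_def by auto
          then show ?thesis using CH_D(2)[OF S, of i] False unfolding T N_def by auto
        qed
      next
        fix i assume i: "i \<notin> {1..K}"
        then have "i \<notin> {1..k}" "i \<noteq> K" unfolding K_def by auto
        then show "T i = {}" using CH_D(3)[OF S] unfolding T by simp
      next
        fix i assume i: "1 \<le> i \<and> i < K"
        show "Max (T i) < Min (T (Suc i))"
        proof (cases "Suc i = K")
          case True then have "i = k" "i \<noteq> K" unfolding K_def by auto
          then show ?thesis using mx i True unfolding T by simp
        next
          case False then have "i < k" "i \<noteq> K" using i unfolding K_def by auto
          then show ?thesis using CH_D(4)[OF S, of i] False i unfolding T by simp
        qed
      qed
      then show "T \<in> P2" unfolding P2_def T by auto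
    qed
  qed
  have b3: "bij_betw (\<lambda>T. T(K:=T K - {N})) P3 (CH K n)"
  proof (rule bij_betw_byWitness[where f'="\<lambda>S. S(K:=insert N (S K))"])
    show "\<forall>a\<in>P3. (a(K := a K - {N}))(K := insert N ((a(K := a K - {N})) K)) = a"
      unfolding P3_def by (auto simp: fun_eq_iff)
    show "\<forall>a\<in>CH K n. (a(K := insert N (a K)))(K := (a(K := insert N (a K))) K - {N}) = a"
    proof
      fix a assume a: "a \<in> CH K n"
      have "N \<notin> a K" using CH_D(2)[OF a, of K] unfolding K_def N_def by auto
      then show "(a(K := insert N (a K)))(K := (a(K := insert N (a K))) K - {N}) = a"
        by (auto simp: fun_eq_iff)
    qed
    show "(\<lambda>T. T(K := T K - {N})) ` P3 \<subseteq> CH K n"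
    proof
      fix S assume "S \<in> (\<lambda>T. T(K := T K - {N})) ` P3"
      then obtain T where T: "T \<in> CH K N" "N \<in> T K" "T K \<noteq> {N}" and S: "S = T(K := T K - {N})" unfolding P3_def by auto
      have sub: "T i \<subseteq> {1..n}" if "i \<in> {1..k}" for i
      proof
        fix x assume x: "x \<in> T i"
        have "x < N" using lt_top[OF T(1) x] that K_def by auto
        moreover have "x \<in> {1..N}" using CH_D(2)[OF T(1), of i] that x unfolding K_def by auto
        ultimately show "x \<in> {1..n}" unfolding N_def by auto
      qed
      have TK: "T K \<subseteq> {1..N}" using CH_D(2)[OF T(1), of K] unfolding K_def by auto
      then have TKf: "finite (T K)" using finite_subset by blast
      have ne: "T K - {N} \<noteq> {}" using T(2,3) by auto
      have sub2: "T K - {N} \<subseteq> {1..n}" using TK unfolding N_def by auto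
      have mn: "Min (T K) \<le> Min (T K - {N})" using TKf ne by (simp add: Min_antimono)
      show "S \<in> CH K n" unfolding CH_def
      proof (intro CollectI conjI allI impI ballI)
        fix i assume i: "i \<in> {1..K}"
        show "S i \<noteq> {}"
        proof (cases "i = K")
          case True then show ?thesis using ne unfolding S by simp
        next
          case False then show ?thesis using CH_D(1)[OF T(1) i] unfolding S by simp
        qed
        show "S i \<subseteq> {1..n}"
        proof (cases "i = K")
          case True then show ?thesis using sub2 unfolding S by simp
        next
          case False then have "i \<in> {1..k}" using i K_def by auto
          then show ?thesis using sub False unfolding S by simp
        qed
      next
        fix i assume i: "i \<notin> {1..K}"
        then have "i \<noteq> K" unfolding K_def by auto
        then show "S i = {}" using CH_D(3)[OF T(1) i] unfolding S by simp
      next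
        fix i assume i: "1 \<le> i \<and> i < K"
        then have lt: "Max (T i) < Min (T (Suc i))" using CH_D(4)[OF T(1)] by auto
        have "i \<noteq> K" using i by auto
        show "Max (S i) < Min (S (Suc i))"
        proof (cases "Suc i = K")
          case True then show ?thesis using mn lt \<open>i \<noteq> K\<close> unfolding S by simp
        next
          case False then show ?thesis using lt \<open>i \<noteq> K\<close> unfolding S by simp
        qed
      qed
    qed
    show "(\<lambda>S. S(K := insert N (S K))) ` CH K n \<subseteq> P3"
    proof
      fix T assume "T \<in> (\<lambda>S. S(K := insert N (S K))) ` CH K n"
      then obtain S where S: "S \<in> CH K n" and T: "T = S(K := insert N (S K))" by auto
      have SK: "S K \<noteq> {}" "S K \<subseteq> {1..n}" using CH_D(1,2)[OF S, of K] unfolding K_def by auto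
      then have SKf: "finite (S K)" using finite_subset by blast
      have mx: "Max (S k) < N" if "1 \<le> k"
      proof -
        have kk: "k \<in> {1..K}" using that K_def by auto
        have "S k \<noteq> {}" "S k \<subseteq> {1..n}" using CH_D(1,2)[OF S kk] by auto
        then have "Max (S k) \<in> {1..n}" using Max_in[of "S k"] finite_subset by blast
        then show ?thesis unfolding N_def by auto
      qed
      have NS: "N \<notin> S K" using SK unfolding N_def by auto
      have "T \<in> CH K N" unfolding CH_def
      proof (intro CollectI conjI allI impI ballI)
        fix i assume i: "i \<in> {1..K}"
        show "T i \<noteq> {}" using CH_D(1)[OF S i] unfolding T by auto
        show "T i \<subseteq> {1..N}" using CH_D(2)[OF S i] unfolding T N_def by auto
      next
        fix i assume i: "i \<notin> {1..K}"
        then have "i \<noteq> K" unfolding K_def by auto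
        then show "T i = {}" using CH_D(3)[OF S i] unfolding T by simp
      next
        fix i assume i: "1 \<le> i \<and> i < K"
        then have lt: "Max (S i) < Min (S (Suc i))" using CH_D(4)[OF S] by auto
        have "i \<noteq> K" using i by auto
        show "Max (T i) < Min (T (Suc i))"
        proof (cases "Suc i = K")
          case True
          then have ik: "i = k" unfolding K_def by auto
          have "Max (S i) < N" using mx ik i by auto
          moreover have "Min (insert N (S K)) = min N (Min (S K))" using SKf SK(1) by (simp add: Min_insert)
          ultimately show ?thesis using lt True \<open>i \<noteq> K\<close> unfolding T by simp
        next
          case False then show ?thesis using lt \<open>i \<noteq> K\<close> unfolding T by simp
        qed
      qed
      then show "T \<in> P3" unfolding P3_def T using NS SK(1) by auto
    qed
  qed
  have "card (CH K N) = card P1 + card P2 + card P3"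
    unfolding U using fin
    by (subst card_Un_disjoint, auto simp: P1_def P2_def P3_def intro!: card_Un_disjoint)
  also have "\<dots> = card (CH K n) + card (CH k n) + card (CH K n)"
    using e1 bij_betw_same_card[OF b2] bij_betw_same_card[OF b3] by simp
  finally show ?thesis unfolding K_def N_def by simp
qed



definition G :: "nat \<Rightarrow> nat \<Rightarrow> nat" where
"G k n = (\<Sum>m<n. (n choose Suc m) * (m choose k))"

lemma G_Suc: "G k (Suc n) = G k n + ((0 choose k) + (\<Sum>m<n. (n choose Suc m) * (Suc m choose k)))"
proof -
  have "G k (Suc n) = (\<Sum>m<Suc n. (n choose m) * (m choose k)) + (\<Sum>m<Suc n. (n choose Suc m) * (m choose k))"
    unfolding G_def by (simp add: sum.distrib algebra_simps)
  also have "(\<Sum>m<Suc n. (n choose Suc m) * (m choose k)) = G k n"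
    unfolding G_def by simp
  also have "(\<Sum>m<Suc n. (n choose m) * (m choose k)) = (0 choose k) + (\<Sum>m<n. (n choose Suc m) * (Suc m choose k))"
    by (subst sum.lessThan_Suc_shift) simp
  finally show ?thesis by simp
qed

lemma G_rec0: "G 0 (Suc n) = 2 * G 0 n + 1"
  using G_Suc[of 0 n] unfolding G_def by simp

lemma G_rec: "G (Suc k) (Suc n) = 2 * G (Suc k) n + G k n"
  using G_Suc[of "Suc k" n] unfolding G_def by (simp add: sum.distrib algebra_simps)

lemma G_real: assumes "1 \<le> k" "k \<le> n"
  shows "real (G (k - 1) n) = real (n choose k) * (\<Sum>j\<le>n-k. real ((n-k) choose j) * real k / (real k + real j))"
proof -
  obtain k' where k': "k = Suc k'" using assms by (cases k) auto
  have "G k' n = (\<Sum>m\<in>{k'..<n}. (n choose Suc m) * (m choose k'))"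
    unfolding G_def by (rule sum.mono_neutral_right) auto
  also have "\<dots> = (\<Sum>j\<in>{0..<n-k'}. (n choose Suc (j + k')) * ((j+k') choose k'))"
    using sum.shift_bounds_nat_ivl[of "\<lambda>m. (n choose Suc m) * (m choose k')" 0 k' "n - k'"] assms k'
    by simp
  also have "{0..<n-k'} = {..n-k}" using assms k' by auto
  finally have e: "G k' n = (\<Sum>j\<le>n-k. (n choose (k + j)) * ((k' + j) choose k'))"
    by (simp add: k' add.commute)
  have t: "real ((n choose (k + j)) * ((k' + j) choose k')) = real (n choose k) * (real ((n-k) choose j) * real k / (real k + real j))"
    if j: "j \<le> n - k" for j
  proof -
    have c1: "(n choose (k + j)) * ((k + j) choose k) = (n choose k) * ((n - k) choose j)"
      using choose_mult[of k "k+j" n] j assms by simp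
    have c2: "k * ((k + j) choose k) = (k + j) * ((k' + j) choose k')"
      using Suc_times_binomial[of k' "k'+j"] k' by simp
    have "real ((n choose (k + j)) * ((k' + j) choose k')) * (real k + real j)
        = real ((n choose (k + j)) * ((k + j) * ((k' + j) choose k')))" by simp
    also have "\<dots> = real ((n choose (k + j)) * (k * ((k + j) choose k)))" using c2 by simp
    also have "\<dots> = real k * real ((n choose (k + j)) * ((k + j) choose k))" by simp
    also have "\<dots> = real k * real ((n choose k) * ((n - k) choose j))" using c1 by simp
    finally show ?thesis using assms by (simp add: field_simps)
  qed
  have "real (G k' n) = (\<Sum>j\<le>n-k. real ((n choose (k + j)) * ((k' + j) choose k')))"
    unfolding e of_nat_sum ..
  also have "\<dots> = (\<Sum>j\<le>n-k. real (n choose k) * (real ((n-k) choose j) * real k / (real k + real j)))"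
    by (rule sum.cong) (use t in auto)
  finally show ?thesis by (simp add: sum_distrib_left k')
qed

lemma hyp_term:
  assumes "k \<le> n" "1 \<le> k"
  shows "pochhammer (real k) m * pochhammer (real k - real n) m / pochhammer (real k + 1) m * (-1) ^ m / fact m
     = real ((n-k) choose m) * real k / (real k + real m)"
proof -
  have p: "pochhammer (real k) m * (real k + real m) = real k * pochhammer (real k + 1) m"
    using pochhammer_rec[of "real k" m] pochhammer_rec'[of "real k" m] by (simp add: mult.commute)
  have nz: "pochhammer (real k + 1) m \<noteq> 0"
    using pochhammer_pos[of "real k + 1" m] by simp
  have b: "real ((n-k) choose m) = pochhammer (real k - real n) m * (-1) ^ m / fact m"
    using assms by (simp add: binomial_gbinomial gbinomial_pochhammer of_nat_diff mult.commute)
  have km: "real k + real m \<noteq> 0" using assms by auto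
  have r: "pochhammer (real k) m / pochhammer (real k + 1) m = real k / (real k + real m)"
    using p nz km by (simp add: divide_eq_eq eq_divide_eq)
  have "pochhammer (real k) m * pochhammer (real k - real n) m / pochhammer (real k + 1) m * (-1) ^ m / fact m
     = (pochhammer (real k) m / pochhammer (real k + 1) m) * (pochhammer (real k - real n) m * (-1) ^ m / fact m)"
    by simp
  also have "\<dots> = real ((n-k) choose m) * real k / (real k + real m)"
    unfolding r b by (simp add: mult_ac)
  finally show ?thesis .
qed

lemma hyp_val:
  assumes "k \<le> n" "1 \<le> k"
  shows "hyp2f1 (real k) (real k - real n) (real k + 1) (-1) = (\<Sum>j\<le>n-k. real ((n-k) choose j) * real k / (real k + real j))"
  unfolding hyp2f1_def hyp_term[OF assms]
  by (rule suminf_finite) auto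

lemma yd: "young_diagram (replicate k 1) = {(i, j). 1 \<le> i \<and> i \<le> k \<and> j = 1}"
  unfolding young_diagram_def by auto

lemma SVT_CH: "card (SVT (replicate k 1) n) = card (CH k n)"
proof (rule bij_betw_same_card[of "\<lambda>T i. T (i, 1)"], rule bij_betw_byWitness[where f'="\<lambda>S (i,j). if j = 1 then S i else {}"])
  show "\<forall>a\<in>SVT (replicate k 1) n. (\<lambda>(i, j). if j = 1 then a (i, 1) else {}) = a"
    unfolding SVT_def yd by (auto simp: fun_eq_iff)
  show "\<forall>a'\<in>CH k n. (\<lambda>i. (case (i, 1) of (i, j) \<Rightarrow> if j = 1 then a' i else {})) = a'"
    by auto
  show "(\<lambda>T i. T (i, 1)) ` SVT (replicate k 1) n \<subseteq> CH k n"
    unfolding SVT_def yd CH_def by auto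
  show "(\<lambda>S (i, j). if j = 1 then S i else {}) ` CH k n \<subseteq> SVT (replicate k 1) n"
  proof
    fix T :: "nat \<times> nat \<Rightarrow> nat set" assume "T \<in> (\<lambda>S (i, j). if j = 1 then S i else {}) ` CH k n"
    then obtain S where S: "S \<in> CH k n" and T: "T = (\<lambda>(i, j). if j = 1 then S i else {})" by auto
    have S1: "\<And>i. i \<in> {1..k} \<Longrightarrow> S i \<noteq> {} \<and> S i \<subseteq> {1..n}"
      and S2: "\<And>i. i \<notin> {1..k} \<Longrightarrow> S i = {}"
      and S3: "\<And>i. 1 \<le> i \<and> i < k \<Longrightarrow> Max (S i) < Min (S (Suc i))"
      using S unfolding CH_def by auto
    show "T \<in> SVT (replicate k 1) n" unfolding SVT_def yd
    proof (intro CollectI conjI allI impI ballI)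
      fix b assume "b \<in> {(i, j). 1 \<le> i \<and> i \<le> k \<and> j = (1::nat)}"
      then show "T b \<noteq> {}" "T b \<subseteq> {1..n}" using S1 unfolding T by (auto; metis atLeastAtMost_iff subsetD)+
    next
      fix b assume b: "b \<notin> {(i, j). 1 \<le> i \<and> i \<le> k \<and> j = (1::nat)}"
      obtain i j where "b = (i, j)" by fastforce
      then show "T b = {}" using b S2 unfolding T by auto
    next
      fix i j assume "(i, j) \<in> {(i, j). 1 \<le> i \<and> i \<le> k \<and> j = (1::nat)} \<and> (i, j + 1) \<in> {(i, j). 1 \<le> i \<and> i \<le> k \<and> j = (1::nat)}"
      then show "Max (T (i, j)) \<le> Min (T (i, j + 1))" by auto
    next
      fix i j assume "(i, j) \<in> {(i, j). 1 \<le> i \<and> i \<le> k \<and> j = (1::nat)} \<and> (i + 1, j) \<in> {(i, j). 1 \<le> i \<and> i \<le> k \<and> j = (1::nat)}"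
      then show "Max (T (i, j)) < Min (T (i + 1, j))" using S3[of i] unfolding T by auto
    qed
  qed
qed

theorem corollary3p4:
  fixes n k :: nat
  assumes "1 \<le> n" and "1 \<le> k" and "k \<le> n"
  shows "real (card (SVT (replicate k 1) n))
           = real (n choose k) * hyp2f1 (real k) (real k - real n) (real k + 1) (-1)"
proof -
  have "card (CH (Suc k') m) = G k' m" for k' m
  proof (induction m arbitrary: k')
    case 0 then show ?case by (simp add: CH_Suc0 G_def)
  next
    case (Suc m)
    show ?case
    proof (cases k')
      case 0 then show ?thesis using CH_step[of 0 m] Suc G_rec0 CH_0 by simp
    next
      case (Suc k'') then show ?thesis using CH_step[of k' m] Suc.IH G_rec[of k'' m] by simp
    qed
  qed
  note cg = this
  obtain k' where k': "k = Suc k'" using assms(2) by (cases k) auto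
  have e: "card (SVT (replicate k 1) n) = G (k - 1) n" unfolding SVT_CH k' using cg by simp
  show ?thesis unfolding e G_real[OF assms(2,3)] hyp_val[OF assms(3,2)] ..
qed

end
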